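(* Let $d$ be odd and let $H$ be a dephased $d\times d$ complex Hadamard matrix. There is no nonzero real $d\times d$ matrix $R$ with zero first row and zero first column whose nonzero entries all lie in only two columns (or all lie in only two rows) such that $H\circ\exp(i\xi R)$ is a complex Hadamard matrix for every $\xi\in\mathbb{R}$. In other words, in an affine family of complex Hadamard matrices of odd order, no parameter can appear in only two columns or only two rows.
   Context: A $d\times d$ complex Hadamard matrix has unimodular entries and pairwise orthogonal columns; it is dephased if its first row and first column consist of $1$'s. $\circ$ denotes the entrywise product and $\exp(i\xi R)$ the entrywise exponential $(\exp(i\xi R))_{jk}=e^{i\xi R_{jk}}$. An affine family stemming from a dephased $H$ is a set $\{H\circ\exp(i\sum_k\xi_kR_k)\}$ with real matrices $R_k$ having zero first row and column. *)

theory Defs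
  imports "HOL-Analysis.Analysis"
begin

text \<open>d x d matrices are represented as functions nat => nat => _ with indices 0..d-1;
  index 0 is the first row / first column.\<close>

definition complex_hadamard :: "nat \<Rightarrow> (nat \<Rightarrow> nat \<Rightarrow> complex) \<Rightarrow> bool" where
  "complex_hadamard d H \<longleftrightarrow>
     (\<forall>j<d. \<forall>k<d. norm (H j k) = 1) \<and>
     (\<forall>k<d. \<forall>l<d. k \<noteq> l \<longrightarrow> (\<Sum>j<d. H j k * cnj (H j l)) = 0)"

definition dephased :: "nat \<Rightarrow> (nat \<Rightarrow> nat \<Rightarrow> complex) \<Rightarrow> bool" where
  "dephased d H \<longleftrightarrow> (\<forall>k<d. H 0 k = 1) \<and> (\<forall>j<d. H j 0 = 1)"

definition had_exp :: "(nat \<Rightarrow> nat \<Rightarrow> complex) \<Rightarrow> real \<Rightarrow> (nat \<Rightarrow> nat \<Rightarrow> real) \<Rightarrow> nat \<Rightarrow> nat \<Rightarrow> complex" where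
  "had_exp H \<xi> R = (\<lambda>j k. H j k * exp (\<i> * complex_of_real (\<xi> * R j k)))"

end

theory Submission imports Defs "Jordan_Normal_Form.Determinant" begin

lemma rows_orth:
  assumes "complex_hadamard d H" "j < d" "l < d"
  shows "(\<Sum>k<d. H j k * cnj (H l k)) = (if j = l then of_nat d else 0)"
proof -
  have d0: "d > 0" using assms by auto
  define A where "A = Matrix.mat d d (\<lambda>(i,k). cnj (H k i) / of_nat d)"
  define B where "B = Matrix.mat d d (\<lambda>(i,k). H i k)"
  have Ac: "A \<in> carrier_mat d d" and Bc: "B \<in> carrier_mat d d" by (auto simp: A_def B_def)
  have col: "(\<Sum>j<d. cnj (H j i) * H j k) = (if i = k then of_nat d else 0)" if "i<d" "k<d" for i k
  proof (cases "i = k")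
    case True
    have "cnj (H j i) * H j i = 1" if "j<d" for j
    proof -
      have "norm (H j i) = 1" using assms(1) that \<open>i<d\<close> by (auto simp: complex_hadamard_def)
      then show ?thesis by (metis complex_norm_square mult.commute of_real_1 power_one)
    qed
    then show ?thesis using True by simp
  next
    case False
    have "(\<Sum>j<d. H j k * cnj (H j i)) = 0" using assms(1) that False by (auto simp: complex_hadamard_def)
    then show ?thesis using False by (simp add: mult.commute)
  qed
  have "A * B = 1\<^sub>m d"
  proof (rule eq_matI)
    fix i k assume ik: "i < dim_row (1\<^sub>m d)" "k < dim_col (1\<^sub>m d)"
    then have "(A * B) $$ (i,k) = (\<Sum>j<d. cnj (H j i) * H j k) / of_nat d"
      by (simp add: A_def B_def scalar_prod_def sum_divide_distrib atLeast0LessThan)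
    also have "\<dots> = 1\<^sub>m d $$ (i,k)" using ik col[of i k] d0 by auto
    finally show "(A * B) $$ (i,k) = 1\<^sub>m d $$ (i,k)" .
  qed (auto simp: A_def B_def)
  then have "B * A = 1\<^sub>m d" using mat_mult_left_right_inverse[OF Ac Bc] by blast
  then have "(B * A) $$ (j,l) = 1\<^sub>m d $$ (j,l)" by simp
  then have "(\<Sum>k<d. H j k * cnj (H l k)) / of_nat d = (if j = l then 1 else 0)"
    using assms by (simp add: A_def B_def scalar_prod_def sum_divide_distrib atLeast0LessThan)
  then show ?thesis using d0 by (auto split: if_splits simp: field_simps)
qed

lemma exp_indep:
  fixes z :: "nat \<Rightarrow> complex" and a :: "nat \<Rightarrow> real"
  assumes "finite J" "\<forall>\<xi>::real. (\<Sum>j\<in>J. z j * exp (\<i> * complex_of_real (\<xi> * a j))) = 0"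
  shows "(\<Sum>j\<in>{j\<in>J. a j = r}. z j) = 0"
  using assms
proof (induction "card (a ` J)" arbitrary: J z rule: less_induct)
  case less
  show ?case
  proof (cases "\<forall>j\<in>J. a j = r")
    case True
    then have "{j\<in>J. a j = r} = J" by auto
    moreover have "(\<Sum>j\<in>J. z j * exp (\<i> * complex_of_real (0 * a j))) = 0" using less.prems by blast
    ultimately show ?thesis by simp
  next
    case False
    then obtain j0 where j0: "j0 \<in> J" "a j0 \<noteq> r" by auto
    define r0 where "r0 = a j0"
    define t where "t = pi / (r - r0)"
    have tr: "t * r = t * r0 + pi" using j0 by (simp add: t_def r0_def field_simps)
    define J' where "J' = {j\<in>J. a j \<noteq> r0}"
    define z' where "z' j = z j * (exp (\<i> * complex_of_real (t * a j)) - exp (\<i> * complex_of_real (t * r0)))" for j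
    have fJ': "finite J'" using less.prems by (simp add: J'_def)
    have "a ` J' \<subseteq> a ` J - {r0}" by (auto simp: J'_def)
    moreover have "r0 \<in> a ` J" using j0 by (simp add: r0_def)
    ultimately have card: "card (a ` J') < card (a ` J)"
    proof -
      have "a ` J' \<subset> a ` J" using \<open>a ` J' \<subseteq> a ` J - {r0}\<close> \<open>r0 \<in> a ` J\<close> by blast
      then show ?thesis using less.prems(1) by (simp add: psubset_card_mono)
    qed
    have ea: "exp (\<i> * complex_of_real (t * b)) * exp (\<i> * complex_of_real (\<xi> * b)) = exp (\<i> * complex_of_real ((t+\<xi>) * b))" for b \<xi>
      by (simp add: exp_add[symmetric] distrib_left distrib_right)
    have sz: "\<forall>\<xi>::real. (\<Sum>j\<in>J'. z' j * exp (\<i> * complex_of_real (\<xi> * a j))) = 0"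
    proof
      fix \<xi> :: real
      have "(\<Sum>j\<in>J'. z' j * exp (\<i> * complex_of_real (\<xi> * a j))) = (\<Sum>j\<in>J. z' j * exp (\<i> * complex_of_real (\<xi> * a j)))"
        by (rule sum.mono_neutral_left) (auto simp: J'_def z'_def less.prems)
      also have "\<dots> = (\<Sum>j\<in>J. z j * exp (\<i> * complex_of_real ((t+\<xi>) * a j))) - exp (\<i> * complex_of_real (t * r0)) * (\<Sum>j\<in>J. z j * exp (\<i> * complex_of_real (\<xi> * a j)))"
        unfolding sum_distrib_left sum_subtractf[symmetric] by (rule sum.cong) (auto simp: z'_def ea[symmetric] algebra_simps exp_add)
      also have "\<dots> = 0" using less.prems(2)[rule_format, of "t+\<xi>"] less.prems(2)[rule_format, of \<xi>] by simp
      finally show "(\<Sum>j\<in>J'. z' j * exp (\<i> * complex_of_real (\<xi> * a j))) = 0" .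
    qed
    have IH: "(\<Sum>j\<in>{j\<in>J'. a j = r}. z' j) = 0" using less.hyps[OF card fJ' sz] .
    define c where "c = exp (\<i> * complex_of_real (t * r)) - exp (\<i> * complex_of_real (t * r0))"
    have "exp (\<i> * complex_of_real (t * r)) = - exp (\<i> * complex_of_real (t * r0))"
      by (simp add: tr distrib_left exp_add)
    then have c: "c = - 2 * exp (\<i> * complex_of_real (t * r0))" by (simp add: c_def)
    then have cnz: "c \<noteq> 0" by simp
    have set: "{j\<in>J'. a j = r} = {j\<in>J. a j = r}" using j0 by (auto simp: J'_def r0_def)
    have "(\<Sum>j\<in>{j\<in>J'. a j = r}. z' j) = c * (\<Sum>j\<in>{j\<in>J. a j = r}. z j)"
      unfolding set sum_distrib_left by (rule sum.cong) (auto simp: z'_def c_def mult.commute)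
    with IH cnz show ?thesis by simp
  qed
qed
lemma col_zero:
  fixes H :: "nat \<Rightarrow> nat \<Rightarrow> complex" and R :: "nat \<Rightarrow> nat \<Rightarrow> real"
  assumes odd: "odd d" and had: "complex_hadamard d H"
    and fam: "\<forall>\<xi>::real. complex_hadamard d (had_exp H \<xi> R)"
    and supp: "\<forall>j<d. \<forall>k<d. R j k \<noteq> 0 \<longrightarrow> k = c \<or> k = c'"
    and r0: "R 0 c = 0" and cd: "c < d" and c'd: "c' < d"
  shows "\<forall>j<d. R j c = 0"
proof (rule ccontr)
  assume "\<not> (\<forall>j<d. R j c = 0)"
  then obtain j1 where j1: "j1 < d" "R j1 c \<noteq> 0" by auto
  have d0: "0 < d" using cd by simp
  have unit: "norm (H j k) = 1" if "j<d" "k<d" for j k using had that by (auto simp: complex_hadamard_def)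
  define S where "S = {j\<in>{..<d}. R j c = 0}"
  define s where "s = card S"
  have sd: "s \<le> d" unfolding s_def S_def by (metis (no_types, lifting) card_lessThan card_mono finite_lessThan mem_Collect_eq subsetI)
  define u where "u j = (if R j c = 0 then H j c else 0)" for j
  define ip where "ip k = (\<Sum>l<d. u l * cnj (H l k))" for k
  have ipS: "ip k = (\<Sum>l\<in>S. H l c * cnj (H l k))" for k
    unfolding ip_def S_def u_def by (rule sum.mono_neutral_cong_right) auto
  have ip0: "ip k = 0" if "k < d" "k \<noteq> c" "k \<noteq> c'" for k
  proof -
    have Rk: "R j k = 0" if "j < d" for j using supp that \<open>k<d\<close> \<open>k \<noteq> c\<close> \<open>k \<noteq> c'\<close> by blast
    have "\<forall>\<xi>::real. (\<Sum>j\<in>{..<d}. (H j c * cnj (H j k)) * exp (\<i> * complex_of_real (\<xi> * R j c))) = 0"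
    proof
      fix \<xi> :: real
      have "(\<Sum>j<d. had_exp H \<xi> R j c * cnj (had_exp H \<xi> R j k)) = 0"
        using fam \<open>k<d\<close> cd \<open>k \<noteq> c\<close> by (auto simp: complex_hadamard_def)
      moreover have "(\<Sum>j<d. had_exp H \<xi> R j c * cnj (had_exp H \<xi> R j k)) =
         (\<Sum>j\<in>{..<d}. (H j c * cnj (H j k)) * exp (\<i> * complex_of_real (\<xi> * R j c)))"
        by (rule sum.cong) (auto simp: had_exp_def Rk)
      ultimately show "(\<Sum>j\<in>{..<d}. (H j c * cnj (H j k)) * exp (\<i> * complex_of_real (\<xi> * R j c))) = 0" by simp
    qed
    from exp_indep[OF finite_lessThan this, of 0] show ?thesis unfolding ipS S_def by simp
  qed
  have ipc: "ip c = of_nat s"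
  proof -
    have "ip c = (\<Sum>l\<in>S. 1)"
      unfolding ipS
    proof (rule sum.cong)
      fix l assume "l \<in> S"
      then have "l < d" by (simp add: S_def)
      then have "norm (H l c) = 1" using unit cd by simp
      then show "H l c * cnj (H l c) = 1" by (metis complex_norm_square of_real_1 power_one)
    qed simp
    then show ?thesis by (simp add: s_def)
  qed
  define \<beta> where "\<beta> = (if c' = c then 0 else ip c')"
  have expand: "of_nat d * u j = of_nat s * H j c + \<beta> * H j c'" if "j < d" for j
  proof -
    have "(\<Sum>k<d. H j k * ip k) = (\<Sum>l<d. u l * (\<Sum>k<d. H j k * cnj (H l k)))"
      unfolding ip_def sum_distrib_left
      by (subst sum.swap) (simp add: algebra_simps)
    also have "\<dots> = (\<Sum>l<d. (if l = j then u l * of_nat d else 0))"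
      by (rule sum.cong) (auto simp: rows_orth[OF had that])
    also have "\<dots> = of_nat d * u j" using that by (simp add: mult.commute)
    finally have A: "(\<Sum>k<d. H j k * ip k) = of_nat d * u j" .
    have "(\<Sum>k<d. H j k * ip k) = (\<Sum>k\<in>{c,c'}. H j k * ip k)"
      by (rule sum.mono_neutral_right) (auto simp: cd c'd ip0)
    also have "\<dots> = of_nat s * H j c + \<beta> * H j c'"
      by (cases "c' = c") (auto simp: \<beta>_def ipc)
    finally show ?thesis using A by simp
  qed
  have e1: "of_nat s * H j1 c = - (\<beta> * H j1 c')" using expand[OF j1(1)] j1 by (simp add: u_def add_eq_0_iff)
  have "norm (of_nat s * H j1 c) = of_nat s" using unit[OF j1(1) cd] by (simp add: norm_mult)
  moreover have "norm (- (\<beta> * H j1 c')) = norm \<beta>" using unit[OF j1(1) c'd] by (simp add: norm_mult)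
  ultimately have n1: "real s = norm \<beta>" using e1 by simp
  have "of_nat d * H 0 c = of_nat s * H 0 c + \<beta> * H 0 c'" using expand[OF d0] r0 by (simp add: u_def)
  then have "(of_nat d - of_nat s) * H 0 c = \<beta> * H 0 c'" by (simp add: algebra_simps)
  then have "of_nat (d - s) * H 0 c = \<beta> * H 0 c'" using sd by (simp add: of_nat_diff)
  then have "norm (of_nat (d - s) * H 0 c) = norm (\<beta> * H 0 c')" by simp
  then have "real (d - s) = norm \<beta>" using unit[OF d0 cd] unit[OF d0 c'd] by (simp add: norm_mult)
  with n1 have "d = 2 * s" using sd by linarith
  with odd show False by simp
qed

lemma transp_had:
  assumes "complex_hadamard d H"
  shows "complex_hadamard d (\<lambda>j k. H k j)"
  unfolding complex_hadamard_def
proof (intro conjI allI impI)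
  fix j k assume "j < d" "k < d"
  then show "norm (H k j) = 1" using assms unfolding complex_hadamard_def by blast
next
  fix k l assume "k < d" "l < d" "k \<noteq> l"
  then show "(\<Sum>j<d. H k j * cnj (H l j)) = 0" using rows_orth[OF assms] by simp
qed

theorem corollary2:
  fixes d :: nat and H :: "nat \<Rightarrow> nat \<Rightarrow> complex"
  assumes "odd d"
    and "complex_hadamard d H" and "dephased d H"
  shows "\<not> (\<exists>R :: nat \<Rightarrow> nat \<Rightarrow> real.
            (\<exists>j<d. \<exists>k<d. R j k \<noteq> 0) \<and>
            (\<forall>k<d. R 0 k = 0) \<and> (\<forall>j<d. R j 0 = 0) \<and>
            ((\<exists>c1<d. \<exists>c2<d. \<forall>j<d. \<forall>k<d. R j k \<noteq> 0 \<longrightarrow> k = c1 \<or> k = c2) \<or>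
             (\<exists>r1<d. \<exists>r2<d. \<forall>j<d. \<forall>k<d. R j k \<noteq> 0 \<longrightarrow> j = r1 \<or> j = r2)) \<and>
            (\<forall>\<xi>::real. complex_hadamard d (had_exp H \<xi> R)))"
proof
  assume "\<exists>R :: nat \<Rightarrow> nat \<Rightarrow> real.
            (\<exists>j<d. \<exists>k<d. R j k \<noteq> 0) \<and>
            (\<forall>k<d. R 0 k = 0) \<and> (\<forall>j<d. R j 0 = 0) \<and>
            ((\<exists>c1<d. \<exists>c2<d. \<forall>j<d. \<forall>k<d. R j k \<noteq> 0 \<longrightarrow> k = c1 \<or> k = c2) \<or>
             (\<exists>r1<d. \<exists>r2<d. \<forall>j<d. \<forall>k<d. R j k \<noteq> 0 \<longrightarrow> j = r1 \<or> j = r2)) \<and>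
            (\<forall>\<xi>::real. complex_hadamard d (had_exp H \<xi> R))"
  then obtain R :: "nat \<Rightarrow> nat \<Rightarrow> real" where A: "(\<exists>j<d. \<exists>k<d. R j k \<noteq> 0) \<and>
            (\<forall>k<d. R 0 k = 0) \<and> (\<forall>j<d. R j 0 = 0) \<and>
            ((\<exists>c1<d. \<exists>c2<d. \<forall>j<d. \<forall>k<d. R j k \<noteq> 0 \<longrightarrow> k = c1 \<or> k = c2) \<or>
             (\<exists>r1<d. \<exists>r2<d. \<forall>j<d. \<forall>k<d. R j k \<noteq> 0 \<longrightarrow> j = r1 \<or> j = r2)) \<and>
            (\<forall>\<xi>::real. complex_hadamard d (had_exp H \<xi> R))" by (rule exE)
  note nz = conjunct1[OF A]
  note row0 = conjunct1[OF conjunct2[OF A]]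
  note col0 = conjunct1[OF conjunct2[OF conjunct2[OF A]]]
  note cases = conjunct1[OF conjunct2[OF conjunct2[OF conjunct2[OF A]]]]
  note fam = conjunct2[OF conjunct2[OF conjunct2[OF conjunct2[OF A]]]]
  from nz obtain j0 k0 where jk: "j0 < d" "k0 < d" "R j0 k0 \<noteq> 0" by blast
  from cases show False
  proof
    assume "\<exists>c1<d. \<exists>c2<d. \<forall>j<d. \<forall>k<d. R j k \<noteq> 0 \<longrightarrow> k = c1 \<or> k = c2"
    then obtain c1 c2 where c: "c1 < d" "c2 < d" and supp: "\<forall>j<d. \<forall>k<d. R j k \<noteq> 0 \<longrightarrow> k = c1 \<or> k = c2" by blast
    have supp': "\<forall>j<d. \<forall>k<d. R j k \<noteq> 0 \<longrightarrow> k = c2 \<or> k = c1" using supp by blast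
    have z1: "\<forall>j<d. R j c1 = 0" by (rule col_zero[OF assms(1,2) fam supp]) (use row0 c in auto)
    have z2: "\<forall>j<d. R j c2 = 0" by (rule col_zero[OF assms(1,2) fam supp']) (use row0 c in auto)
    have "k0 = c1 \<or> k0 = c2" using supp jk by blast
    then show False using jk z1 z2 by auto
  next
    assume "\<exists>r1<d. \<exists>r2<d. \<forall>j<d. \<forall>k<d. R j k \<noteq> 0 \<longrightarrow> j = r1 \<or> j = r2"
    then obtain r1 r2 where c: "r1 < d" "r2 < d" and supp: "\<forall>j<d. \<forall>k<d. R j k \<noteq> 0 \<longrightarrow> j = r1 \<or> j = r2" by blast
    define R' where "R' = (\<lambda>j k. R k j)"
    define H' where "H' = (\<lambda>j k. H k j)"
    have had': "complex_hadamard d H'" unfolding H'_def by (rule transp_had[OF assms(2)])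
    have fam': "\<forall>\<xi>::real. complex_hadamard d (had_exp H' \<xi> R')"
    proof
      fix \<xi> :: real
      have "had_exp H' \<xi> R' = (\<lambda>j k. had_exp H \<xi> R k j)" by (simp add: had_exp_def H'_def R'_def)
      then show "complex_hadamard d (had_exp H' \<xi> R')" using transp_had[OF fam[rule_format, of \<xi>]] by simp
    qed
    have s1: "\<forall>j<d. \<forall>k<d. R' j k \<noteq> 0 \<longrightarrow> k = r1 \<or> k = r2" using supp by (auto simp: R'_def)
    have s2: "\<forall>j<d. \<forall>k<d. R' j k \<noteq> 0 \<longrightarrow> k = r2 \<or> k = r1" using supp by (auto simp: R'_def)
    have z1: "\<forall>j<d. R' j r1 = 0" by (rule col_zero[OF assms(1) had' fam' s1]) (use col0 c in \<open>auto simp: R'_def\<close>)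
    have z2: "\<forall>j<d. R' j r2 = 0" by (rule col_zero[OF assms(1) had' fam' s2]) (use col0 c in \<open>auto simp: R'_def\<close>)
    have "j0 = r1 \<or> j0 = r2" using supp jk by blast
    then show False using jk z1 z2 by (auto simp: R'_def)
  qed
qed

end
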